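(* The dual norm of the dual space $\mathcal R^*$ of Read's space $\mathcal R=(c_0,|||\cdot|||)$ is $2/3$-rough, i.e. for every $x^*\in\mathcal R^*$, $$\limsup_{|||h|||\to 0}\frac{|||x^*+h|||+|||x^*-h|||-2|||x^*|||}{|||h|||}\ge \frac23,$$ where $|||\cdot|||$ on $\mathcal R^*$ denotes the dual norm. In particular, the norm of $\mathcal R^*$ is not Fréchet differentiable at any point.
   Context: Let $c_{00}(\mathbb Q)$ be the set of finitely supported sequences with rational coefficients, and let $(u_n)_{n\in\mathbb N}$ be a sequence in $c_{00}(\mathbb Q)$ which lists every element of $c_{00}(\mathbb Q)$ infinitely many times. Let $(a_n)_{n\in\mathbb N}$ be a strictly increasing sequence of positive integers with $a_n>\max\operatorname{supp} u_n$ and $a_n>\|u_n\|_1$ for every $n$. $(e_n)$ denotes the canonical unit vectors and $\langle x,y\rangle=\sum_n x_ny_n$. Read's norm on $c_0$ is $|||x||| = \|x\|_\infty + \sum_{n} 2^{-a_n^2}|\langle x, u_n - e_{a_n}\rangle|$, and Read's space is $\mathcal R=(c_0,|||\cdot|||)$ (real scalars). A norm on a Banach space $Z$ is $\varepsilon$-rough ($\varepsilon>0$) if $\limsup_{\|h\|\to0}\frac{\|z+h\|+\|z-h\|-2\|z\|}{\|h\|}\ge\varepsilon$ for every $z\in Z$. *)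

theory Defs
  imports "HOL-Analysis.Analysis"
begin

definition c0 :: "(nat \<Rightarrow> real) set" where
  "c0 = {x. x \<longlonglongrightarrow> 0}"

definition c00Q :: "(nat \<Rightarrow> rat) set" where
  "c00Q = {v. finite {k. v k \<noteq> 0}}"

definition supp :: "(nat \<Rightarrow> rat) \<Rightarrow> nat set" where
  "supp v = {k. v k \<noteq> 0}"

definition l1norm :: "(nat \<Rightarrow> rat) \<Rightarrow> real" where
  "l1norm v = (\<Sum>k\<in>supp v. \<bar>real_of_rat (v k)\<bar>)"

definition pair :: "(nat \<Rightarrow> real) \<Rightarrow> (nat \<Rightarrow> rat) \<Rightarrow> real" where
  "pair x v = (\<Sum>k\<in>supp v. x k * real_of_rat (v k))"

definition sup_norm :: "(nat \<Rightarrow> real) \<Rightarrow> real" where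
  "sup_norm x = (SUP k. \<bar>x k\<bar>)"

definition read_params :: "(nat \<Rightarrow> nat \<Rightarrow> rat) \<Rightarrow> (nat \<Rightarrow> nat) \<Rightarrow> bool" where
  "read_params u a \<longleftrightarrow>
     (\<forall>n. u n \<in> c00Q) \<and>
     (\<forall>v\<in>c00Q. infinite {n. u n = v}) \<and>
     strict_mono a \<and> (\<forall>n. 0 < a n) \<and>
     (\<forall>n. \<forall>k\<in>supp (u n). k < a n) \<and>
     (\<forall>n. l1norm (u n) < real (a n))"

definition read_norm :: "(nat \<Rightarrow> nat \<Rightarrow> rat) \<Rightarrow> (nat \<Rightarrow> nat) \<Rightarrow> (nat \<Rightarrow> real) \<Rightarrow> real" where
  "read_norm u a x = sup_norm x +
     (\<Sum>n. (1/2) ^ ((a n)^2) * \<bar>pair x (u n) - x (a n)\<bar>)"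

text \<open>The dual space of (c0, read_norm): linear functionals on c0 bounded w.r.t. Read's norm.
  Functionals are represented as functions on all sequences; only their values on c0 matter.\<close>
definition read_dual :: "(nat \<Rightarrow> nat \<Rightarrow> rat) \<Rightarrow> (nat \<Rightarrow> nat) \<Rightarrow> ((nat \<Rightarrow> real) \<Rightarrow> real) set" where
  "read_dual u a = {f.
     (\<forall>x\<in>c0. \<forall>y\<in>c0. f (\<lambda>k. x k + y k) = f x + f y) \<and>
     (\<forall>x\<in>c0. \<forall>c::real. f (\<lambda>k. c * x k) = c * f x) \<and>
     (\<exists>C. \<forall>x\<in>c0. \<bar>f x\<bar> \<le> C * read_norm u a x)}"

definition dual_norm :: "(nat \<Rightarrow> nat \<Rightarrow> rat) \<Rightarrow> (nat \<Rightarrow> nat) \<Rightarrow> ((nat \<Rightarrow> real) \<Rightarrow> real) \<Rightarrow> real" where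
  "dual_norm u a f = (SUP x\<in>{x\<in>c0. read_norm u a x \<le> 1}. \<bar>f x\<bar>)"

text \<open>A norm N on a space X of real-valued functions (pointwise operations) is eps-rough if for every z in X,
  limsup_{N h -> 0, h ~= 0} (N(z+h) + N(z-h) - 2 N z) / N h >= eps
  (the limsup written out explicitly).\<close>
definition rough :: "('a \<Rightarrow> real) set \<Rightarrow> (('a \<Rightarrow> real) \<Rightarrow> real) \<Rightarrow> real \<Rightarrow> bool" where
  "rough X N \<epsilon> \<longleftrightarrow>
     (\<forall>z\<in>X. \<forall>\<delta>>0. \<forall>\<eta>>0. \<exists>h\<in>X. 0 < N h \<and> N h < \<delta> \<and>
        (N (\<lambda>s. z s + h s) + N (\<lambda>s. z s - h s) - 2 * N z) / N h > \<epsilon> - \<eta>)"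

end

theory Submission imports Defs begin

lemma c0_bdd: "x \<in> c0 \<Longrightarrow> bdd_above (range (\<lambda>k. \<bar>x k\<bar>))"
proof -
  assume "x \<in> c0"
  then have "Bseq x" unfolding c0_def using convergent_imp_Bseq convergentI by blast
  then obtain K where "\<forall>k. norm (x k) \<le> K" by (meson BseqE)
  then show ?thesis by (auto intro: bdd_aboveI2[where M=K])
qed

lemma abs_le_sup: "x \<in> c0 \<Longrightarrow> \<bar>x k\<bar> \<le> sup_norm x"
  unfolding sup_norm_def using c0_bdd by (auto intro: cSUP_upper)

lemma sup_le: "(\<And>k. \<bar>x k\<bar> \<le> B) \<Longrightarrow> sup_norm x \<le> B"
  unfolding sup_norm_def by (auto intro: cSUP_least)

lemma sup_nonneg: "x \<in> c0 \<Longrightarrow> 0 \<le> sup_norm x"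
  using abs_le_sup[of x 0] by linarith

lemma pair_bound:
  assumes "v \<in> c00Q" "\<And>k. \<bar>x k\<bar> \<le> B"
  shows "\<bar>pair x v\<bar> \<le> B * l1norm v"
proof -
  have "\<bar>pair x v\<bar> \<le> (\<Sum>k\<in>supp v. \<bar>x k * real_of_rat (v k)\<bar>)"
    unfolding pair_def by (rule sum_abs)
  also have "\<dots> \<le> (\<Sum>k\<in>supp v. B * \<bar>real_of_rat (v k)\<bar>)"
    by (intro sum_mono) (simp add: abs_mult assms(2) mult_right_mono)
  also have "\<dots> = B * l1norm v" unfolding l1norm_def by (simp add: sum_distrib_left)
  finally show ?thesis .
qed

lemma pair_lin: "pair (\<lambda>k. x k + c * y k) v = pair x v + c * pair y v"
  unfolding pair_def by (simp add: algebra_simps sum.distrib sum_distrib_left)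

lemma a_ge: assumes "read_params u a" shows "n + 1 \<le> a n"
proof (induction n)
  case 0 then show ?case using assms unfolding read_params_def by (simp add: Suc_le_eq)
next
  case (Suc n)
  have "a n < a (Suc n)" using assms unfolding read_params_def strict_mono_def by simp
  then show ?case using Suc by simp
qed

lemma numeric_nat: assumes "n + 1 \<le> (A::nat)" shows "(A + 1) * 4 ^ n \<le> 2 ^ (A^2)"
proof -
  obtain b where b: "A = b + 1" using assms by (metis add.commute le_add_diff_inverse2 le_add2 le_trans)
  have "n \<le> b" using assms b by simp
  have "(4::nat) ^ n \<le> 4 ^ b" using \<open>n \<le> b\<close> by (simp add: power_increasing)
  also have "\<dots> = 2 ^ (2*b)" by (simp add: power_mult)
  finally have 1: "(4::nat) ^ n \<le> 2 ^ (2*b)" .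
  have "b + 2 \<le> 2 * 2 ^ b" using less_exp[of b] by linarith
  also have "(2::nat) ^ b \<le> 2 ^ (b^2)" by (intro power_increasing) (auto simp: power2_eq_square)
  finally have 2: "b + 2 \<le> 2 * 2 ^ (b^2)" by simp
  have "(A + 1) * 4 ^ n \<le> (2 * 2 ^ (b^2)) * 2 ^ (2*b)"
    using mult_le_mono[OF 2 1] b by (simp add: add.commute)
  also have "\<dots> = 2 ^ (b^2 + 2*b + 1)" by (simp add: power_add)
  also have "b^2 + 2*b + 1 = A^2" using b by (simp add: power2_eq_square algebra_simps)
  finally show ?thesis .
qed

lemma numeric: assumes "n + 1 \<le> (A::nat)" shows "(real A + 1) * (1/2)^(A^2) \<le> (1/4::real)^n"
proof -
  have "real ((A + 1) * 4 ^ n) \<le> real (2 ^ (A^2))" using numeric_nat[OF assms] by linarith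
  then have h: "(real A + 1) * 4 ^ n \<le> 2 ^ (A^2)" by (simp only: of_nat_mult of_nat_add of_nat_power of_nat_1 of_nat_numeral)
  have "(real A + 1) * (1/2)^(A^2) = ((real A + 1) * 4 ^ n) / 2^(A^2) / 4^n"
    by (simp add: power_one_over)
  also have "\<dots> \<le> 2 ^ (A^2) / 2^(A^2) / 4^n"
    using h by (intro divide_right_mono) auto
  also have "\<dots> = (1/4)^n" by (simp add: power_one_over)
  finally show ?thesis .
qed

definition Tm :: "(nat \<Rightarrow> nat \<Rightarrow> rat) \<Rightarrow> (nat \<Rightarrow> nat) \<Rightarrow> (nat \<Rightarrow> real) \<Rightarrow> nat \<Rightarrow> real" where
  "Tm u a x n = (1/2) ^ ((a n)^2) * \<bar>pair x (u n) - x (a n)\<bar>"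

definition SS :: "(nat \<Rightarrow> nat \<Rightarrow> rat) \<Rightarrow> (nat \<Rightarrow> nat) \<Rightarrow> (nat \<Rightarrow> real) \<Rightarrow> real" where
  "SS u a x = (\<Sum>n. Tm u a x n)"

lemma R_eq: "read_norm u a x = sup_norm x + SS u a x"
  unfolding read_norm_def SS_def Tm_def by simp

lemma Tm_nonneg: "0 \<le> Tm u a x n" unfolding Tm_def by simp

lemma Tm_bound:
  assumes rp: "read_params u a" and B: "\<And>k. \<bar>x k\<bar> \<le> B"
  shows "Tm u a x n \<le> B * (1/4)^n"
proof -
  have B0: "0 \<le> B" using B[of 0] by linarith
  have uc: "u n \<in> c00Q" using rp unfolding read_params_def by auto
  have l1: "l1norm (u n) \<le> real (a n)" using rp unfolding read_params_def by (simp add: less_imp_le)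
  have "\<bar>pair x (u n) - x (a n)\<bar> \<le> \<bar>pair x (u n)\<bar> + \<bar>x (a n)\<bar>" by linarith
  also have "\<dots> \<le> B * l1norm (u n) + B" using pair_bound[OF uc B] B by (meson add_mono)
  also have "\<dots> \<le> B * real (a n) + B" using l1 B0 by (simp add: mult_left_mono)
  finally have h: "\<bar>pair x (u n) - x (a n)\<bar> \<le> B * (real (a n) + 1)" by (simp add: algebra_simps)
  have "Tm u a x n \<le> (1/2) ^ ((a n)^2) * (B * (real (a n) + 1))"
    unfolding Tm_def using h by (intro mult_left_mono) auto
  also have "\<dots> = B * ((real (a n) + 1) * (1/2) ^ ((a n)^2))" by simp
  also have "\<dots> \<le> B * (1/4)^n" using numeric[OF a_ge[OF rp]] B0 by (intro mult_left_mono) auto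
  finally show ?thesis .
qed

lemma summable_Tm:
  assumes rp: "read_params u a" and B: "\<And>k. \<bar>x k\<bar> \<le> B"
  shows "summable (Tm u a x)"
  by (rule summable_comparison_test[where g="\<lambda>n. B * (1/4)^n"])
     (auto simp: Tm_nonneg Tm_bound[OF rp B] intro!: summable_mult[OF summable_geometric])

lemma SS_nonneg: assumes rp: "read_params u a" and B: "\<And>k. \<bar>x k\<bar> \<le> B"
  shows "0 \<le> SS u a x"
  unfolding SS_def by (rule suminf_nonneg[OF summable_Tm[OF rp B]]) (simp add: Tm_nonneg)

lemma SS_le: assumes rp: "read_params u a" and B: "\<And>k. \<bar>x k\<bar> \<le> B"
  shows "SS u a x \<le> B * (4/3)"
proof -
  have "SS u a x \<le> (\<Sum>n. B * (1/4)^n)" unfolding SS_def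
    by (rule suminf_le[OF Tm_bound[OF rp B] summable_Tm[OF rp B] summable_mult[OF summable_geometric]]) auto
  also have "\<dots> = B * (4/3)" using suminf_mult[OF summable_geometric[of "1/4::real"]] suminf_geometric[of "1/4::real"]
    by simp
  finally show ?thesis .
qed

lemma pair_scale: "pair (\<lambda>k. c * x k) v = c * pair x v"
  unfolding pair_def by (simp add: algebra_simps sum_distrib_left)

lemma Tm_scale: "Tm u a (\<lambda>k. c * x k) n = \<bar>c\<bar> * Tm u a x n"
proof -
  have "pair (\<lambda>k. c * x k) (u n) - c * x (a n) = c * (pair x (u n) - x (a n))"
    unfolding pair_scale by (simp add: right_diff_distrib)
  then show ?thesis unfolding Tm_def by (simp add: abs_mult)
qed

lemma SS_scale: assumes rp: "read_params u a" and B: "\<And>k. \<bar>x k\<bar> \<le> B"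
  shows "SS u a (\<lambda>k. c * x k) = \<bar>c\<bar> * SS u a x"
  unfolding SS_def Tm_scale by (rule suminf_mult[OF summable_Tm[OF rp B]])

lemma Tm_lin: "Tm u a (\<lambda>k. x k + c * y k) n \<le> Tm u a x n + \<bar>c\<bar> * Tm u a y n"
proof -
  have "\<bar>pair (\<lambda>k. x k + c * y k) (u n) - (x (a n) + c * y (a n))\<bar>
      = \<bar>(pair x (u n) - x (a n)) + c * (pair y (u n) - y (a n))\<bar>"
    unfolding pair_lin by (simp add: algebra_simps)
  also have "\<dots> \<le> \<bar>pair x (u n) - x (a n)\<bar> + \<bar>c\<bar> * \<bar>pair y (u n) - y (a n)\<bar>"
    by (metis abs_mult abs_triangle_ineq)
  finally have h: "\<bar>pair (\<lambda>k. x k + c * y k) (u n) - (x (a n) + c * y (a n))\<bar> \<le> \<bar>pair x (u n) - x (a n)\<bar> + \<bar>c\<bar> * \<bar>pair y (u n) - y (a n)\<bar>" .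
  have "(1/2::real) ^ ((a n)^2) * \<bar>pair (\<lambda>k. x k + c * y k) (u n) - (x (a n) + c * y (a n))\<bar>
     \<le> (1/2) ^ ((a n)^2) * (\<bar>pair x (u n) - x (a n)\<bar> + \<bar>c\<bar> * \<bar>pair y (u n) - y (a n)\<bar>)"
    using h by (intro mult_left_mono) auto
  then show ?thesis unfolding Tm_def by (simp add: algebra_simps)
qed

lemma SS_lin:
  assumes rp: "read_params u a" and Bx: "\<And>k. \<bar>x k\<bar> \<le> B" and By: "\<And>k. \<bar>y k\<bar> \<le> B'"
  shows "SS u a (\<lambda>k. x k + c * y k) \<le> SS u a x + \<bar>c\<bar> * SS u a y"
proof -
  have Bz: "\<bar>x k + c * y k\<bar> \<le> B + \<bar>c\<bar> * B'" for k
  proof -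
    have "\<bar>x k + c * y k\<bar> \<le> \<bar>x k\<bar> + \<bar>c\<bar> * \<bar>y k\<bar>" by (metis abs_mult abs_triangle_ineq)
    also have "\<dots> \<le> B + \<bar>c\<bar> * B'" using Bx[of k] By[of k] by (intro add_mono mult_left_mono) auto
    finally show ?thesis .
  qed
  have "SS u a (\<lambda>k. x k + c * y k) \<le> (\<Sum>n. Tm u a x n + \<bar>c\<bar> * Tm u a y n)"
    unfolding SS_def
    by (rule suminf_le[OF Tm_lin summable_Tm[OF rp Bz] summable_add[OF summable_Tm[OF rp Bx] summable_mult[OF summable_Tm[OF rp By]]]])
  also have "\<dots> = (\<Sum>n. Tm u a x n) + (\<Sum>n. \<bar>c\<bar> * Tm u a y n)"
    by (rule suminf_add[OF summable_Tm[OF rp Bx] summable_mult[OF summable_Tm[OF rp By]], symmetric])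
  also have "\<dots> = SS u a x + \<bar>c\<bar> * SS u a y" unfolding SS_def
    by (simp only: suminf_mult[OF summable_Tm[OF rp By]])
  finally show ?thesis .
qed

lemma c0_scale: "x \<in> c0 \<Longrightarrow> (\<lambda>k. c * x k) \<in> c0"
  unfolding c0_def using tendsto_mult_right_zero by auto

lemma c0_add: "x \<in> c0 \<Longrightarrow> y \<in> c0 \<Longrightarrow> (\<lambda>k. x k + y k) \<in> c0"
  unfolding c0_def using tendsto_add_zero by auto

lemma c0_zero: "(\<lambda>k. 0) \<in> c0" unfolding c0_def by simp

lemma c0_unit: "(\<lambda>k. if k = m then 1 else 0) \<in> c0"
proof -
  have "eventually (\<lambda>k. (if k = m then 1 else 0::real) = 0) sequentially"
    by (rule eventually_sequentiallyI[of "Suc m"]) auto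
  then have "(\<lambda>k. if k = m then 1 else 0::real) \<longlonglongrightarrow> 0" by (rule tendsto_eventually)
  then show ?thesis unfolding c0_def by simp
qed

lemma c0_bounded: "x \<in> c0 \<Longrightarrow> \<bar>x k\<bar> \<le> sup_norm x" by (rule abs_le_sup)

lemma sup_scale: assumes "x \<in> c0" shows "sup_norm (\<lambda>k. c * x k) = \<bar>c\<bar> * sup_norm x"
proof (rule antisym)
  show "sup_norm (\<lambda>k. c * x k) \<le> \<bar>c\<bar> * sup_norm x"
    by (rule sup_le) (simp add: abs_mult abs_le_sup[OF assms] mult_left_mono)
next
  show "\<bar>c\<bar> * sup_norm x \<le> sup_norm (\<lambda>k. c * x k)"
  proof (cases "c = 0")
    case True
    then show ?thesis using sup_nonneg[OF c0_scale[OF assms, of 0]] by simp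
  next
    case False
    have "sup_norm x \<le> sup_norm (\<lambda>k. c * x k) / \<bar>c\<bar>"
    proof (rule sup_le)
      fix k
      have "\<bar>c * x k\<bar> \<le> sup_norm (\<lambda>k. c * x k)" using abs_le_sup[OF c0_scale[OF assms, of c]] by simp
      then show "\<bar>x k\<bar> \<le> sup_norm (\<lambda>k. c * x k) / \<bar>c\<bar>" using False by (simp add: abs_mult field_simps)
    qed
    then show ?thesis using False by (simp add: field_simps)
  qed
qed

lemma R_scale: assumes rp: "read_params u a" and x: "x \<in> c0"
  shows "read_norm u a (\<lambda>k. c * x k) = \<bar>c\<bar> * read_norm u a x"
  unfolding R_eq sup_scale[OF x] SS_scale[OF rp abs_le_sup[OF x]] by (simp add: algebra_simps)

lemma SS_nonneg': "read_params u a \<Longrightarrow> x \<in> c0 \<Longrightarrow> 0 \<le> SS u a x"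
  using SS_nonneg abs_le_sup by blast

lemma R_ge_sup: "read_params u a \<Longrightarrow> x \<in> c0 \<Longrightarrow> sup_norm x \<le> read_norm u a x"
  unfolding R_eq using SS_nonneg' by simp

lemma R_le_sup: assumes rp: "read_params u a" and x: "x \<in> c0" shows "read_norm u a x \<le> (7/3) * sup_norm x"
proof -
  have B: "\<And>k. \<bar>x k\<bar> \<le> sup_norm x" using abs_le_sup[OF x] .
  show ?thesis unfolding R_eq using SS_le[where x=x and B="sup_norm x", OF rp B] by simp
qed

lemma R_nonneg: "read_params u a \<Longrightarrow> x \<in> c0 \<Longrightarrow> 0 \<le> read_norm u a x"
  using R_ge_sup sup_nonneg by (meson order_trans)

lemma R_zero: "read_norm u a (\<lambda>k. 0) = 0"
proof -
  have "sup_norm (\<lambda>k. 0::real) = 0" unfolding sup_norm_def by simp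
  moreover have "pair (\<lambda>k. 0) v = 0" for v unfolding pair_def by simp
  ultimately show ?thesis unfolding read_norm_def by simp
qed

lemma dual_zero: assumes "g \<in> read_dual u a" shows "g (\<lambda>k. 0) = 0"
proof -
  have H: "\<forall>x\<in>c0. \<forall>c. g (\<lambda>k. c * x k) = c * g x" using assms unfolding read_dual_def by blast
  have "g (\<lambda>k. 0 * (0::real)) = 0 * g (\<lambda>k. 0)" using H[rule_format, OF c0_zero, of 0] by simp
  then show ?thesis by simp
qed

lemma dual_bdd: assumes rp: "read_params u a" and g: "g \<in> read_dual u a"
  shows "bdd_above ((\<lambda>x. \<bar>g x\<bar>) ` {x\<in>c0. read_norm u a x \<le> 1})"
proof -
  obtain C where C: "\<forall>x\<in>c0. \<bar>g x\<bar> \<le> C * read_norm u a x" using g unfolding read_dual_def by blast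
  have "\<bar>g x\<bar> \<le> \<bar>C\<bar>" if "x \<in> c0" "read_norm u a x \<le> 1" for x
  proof -
    have "\<bar>g x\<bar> \<le> C * read_norm u a x" using C that by blast
    also have "\<dots> \<le> \<bar>C\<bar> * read_norm u a x" using R_nonneg[OF rp that(1)] by (simp add: mult_right_mono)
    also have "\<dots> \<le> \<bar>C\<bar> * 1" using that(2) by (intro mult_left_mono) auto
    finally show ?thesis by simp
  qed
  then show ?thesis by (intro bdd_aboveI2[where M="\<bar>C\<bar>"]) auto
qed

lemma dual_nonneg: assumes rp: "read_params u a" and g: "g \<in> read_dual u a"
  shows "0 \<le> dual_norm u a g"
proof -
  have "\<bar>g (\<lambda>k. 0)\<bar> \<le> dual_norm u a g" unfolding dual_norm_def
    by (rule cSUP_upper[OF _ dual_bdd[OF rp g]]) (simp add: c0_zero R_zero)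
  then show ?thesis by simp
qed

lemma dual_le: assumes "\<And>x. x \<in> c0 \<Longrightarrow> read_norm u a x \<le> 1 \<Longrightarrow> \<bar>g x\<bar> \<le> M"
  shows "dual_norm u a g \<le> M"
  unfolding dual_norm_def
  by (rule cSUP_least) (use assms c0_zero R_zero in auto)

lemma dual_bound: assumes rp: "read_params u a" and g: "g \<in> read_dual u a" and y: "y \<in> c0"
  shows "\<bar>g y\<bar> \<le> dual_norm u a g * read_norm u a y"
proof (cases "read_norm u a y = 0")
  case True
  then have "\<bar>y k\<bar> \<le> 0" for k using abs_le_sup[OF y, of k] R_ge_sup[OF rp y] by simp
  then have "y = (\<lambda>k. 0)" by auto
  then show ?thesis using dual_zero[OF g] True by simp
next
  case False
  define r where "r = read_norm u a y"
  have r0: "r > 0" using False R_nonneg[OF rp y] unfolding r_def by simp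
  define y' where "y' = (\<lambda>k. (1/r) * y k)"
  have y'c: "y' \<in> c0" unfolding y'_def by (rule c0_scale[OF y])
  have "read_norm u a y' = 1" unfolding y'_def R_scale[OF rp y] using r0 unfolding r_def by simp
  then have "\<bar>g y'\<bar> \<le> dual_norm u a g" unfolding dual_norm_def
    by (intro cSUP_upper[OF _ dual_bdd[OF rp g]]) (simp add: y'c)
  moreover have "g y' = (1/r) * g y"
  proof -
    have H: "\<forall>x\<in>c0. \<forall>c. g (\<lambda>k. c * x k) = c * g x" using g unfolding read_dual_def by blast
    show ?thesis unfolding y'_def using H[rule_format, OF y, of "1/r"] .
  qed
  ultimately have "\<bar>g y\<bar> / r \<le> dual_norm u a g" using r0 by (simp add: abs_mult)
  then show ?thesis using r0 unfolding r_def by (simp add: field_simps)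
qed

lemma dual_lin: assumes g: "g \<in> read_dual u a" and x: "x \<in> c0" and y: "y \<in> c0"
  shows "g (\<lambda>k. x k + c * y k) = g x + c * g y"
proof -
  have A: "\<forall>x\<in>c0. \<forall>y\<in>c0. g (\<lambda>k. x k + y k) = g x + g y" using g unfolding read_dual_def by blast
  have H: "\<forall>x\<in>c0. \<forall>c. g (\<lambda>k. c * x k) = c * g x" using g unfolding read_dual_def by blast
  have "g (\<lambda>k. x k + (\<lambda>k. c * y k) k) = g x + g (\<lambda>k. c * y k)"
    using A[rule_format, OF x c0_scale[OF y]] .
  then show ?thesis using H[rule_format, OF y, of c] by simp
qed

lemma dual_add: assumes rp: "read_params u a" and f: "f \<in> read_dual u a" and g: "g \<in> read_dual u a"
  shows "(\<lambda>s. f s + c * g s) \<in> read_dual u a"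
proof -
  obtain C where C: "\<forall>x\<in>c0. \<bar>f x\<bar> \<le> C * read_norm u a x" using f unfolding read_dual_def by blast
  obtain C' where C': "\<forall>x\<in>c0. \<bar>g x\<bar> \<le> C' * read_norm u a x" using g unfolding read_dual_def by blast
  have Af: "\<forall>x\<in>c0. \<forall>y\<in>c0. f (\<lambda>k. x k + y k) = f x + f y" using f unfolding read_dual_def by blast
  have Hf: "\<forall>x\<in>c0. \<forall>c. f (\<lambda>k. c * x k) = c * f x" using f unfolding read_dual_def by blast
  have Ag: "\<forall>x\<in>c0. \<forall>y\<in>c0. g (\<lambda>k. x k + y k) = g x + g y" using g unfolding read_dual_def by blast
  have Hg: "\<forall>x\<in>c0. \<forall>c. g (\<lambda>k. c * x k) = c * g x" using g unfolding read_dual_def by blast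
  have bd: "\<bar>f x + c * g x\<bar> \<le> (C + \<bar>c\<bar> * C') * read_norm u a x" if "x \<in> c0" for x
  proof -
    have "\<bar>f x + c * g x\<bar> \<le> \<bar>f x\<bar> + \<bar>c\<bar> * \<bar>g x\<bar>" by (metis abs_mult abs_triangle_ineq)
    also have "\<dots> \<le> C * read_norm u a x + \<bar>c\<bar> * (C' * read_norm u a x)"
      using C C' that by (intro add_mono mult_left_mono) auto
    finally show ?thesis by (simp add: algebra_simps)
  qed
  have 1: "\<forall>x\<in>c0. \<forall>y\<in>c0. f (\<lambda>k. x k + y k) + c * g (\<lambda>k. x k + y k) = (f x + c * g x) + (f y + c * g y)"
    using Af Ag by (simp add: algebra_simps)
  have 2: "\<forall>x\<in>c0. \<forall>d. f (\<lambda>k. d * x k) + c * g (\<lambda>k. d * x k) = d * (f x + c * g x)"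
    using Hf Hg by (simp add: algebra_simps)
  show ?thesis unfolding read_dual_def using 1 2 bd by blast
qed

lemma eval_dual: assumes rp: "read_params u a" and t: "0 \<le> t"
  shows "(\<lambda>w. t * w m) \<in> read_dual u a"
proof -
  have "\<bar>t * x m\<bar> \<le> t * read_norm u a x" if "x \<in> c0" for x
    using abs_le_sup[OF that, of m] R_ge_sup[OF rp that] t by (simp add: abs_mult mult_left_mono)
  then show ?thesis unfolding read_dual_def by (auto simp: algebra_simps)
qed

lemma normalize: assumes rp: "read_params u a" and f: "f \<in> read_dual u a" and y: "y \<in> c0"
  and R: "read_norm u a y > 0"
  shows "\<exists>x\<in>c0. read_norm u a x = 1 \<and> f x = \<bar>f y\<bar> / read_norm u a y"
proof -
  define c where "c = (if f y \<ge> 0 then 1 else -1::real) / read_norm u a y"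
  have H: "\<forall>x\<in>c0. \<forall>c. f (\<lambda>k. c * x k) = c * f x" using f unfolding read_dual_def by blast
  have "read_norm u a (\<lambda>k. c * y k) = 1" unfolding R_scale[OF rp y] c_def using R by simp
  moreover have "f (\<lambda>k. c * y k) = \<bar>f y\<bar> / read_norm u a y"
    unfolding H[rule_format, OF y] c_def by auto
  ultimately show ?thesis using c0_scale[OF y] by blast
qed

lemma unit_sup: "sup_norm (\<lambda>k. if k = m then 1 else 0) \<le> 1"
  by (rule sup_le) auto

lemma unit_R: assumes rp: "read_params u a" shows "1 \<le> read_norm u a (\<lambda>k. if k = m then 1 else 0)"
  using abs_le_sup[OF c0_unit, of m m] R_ge_sup[OF rp c0_unit, of m] by simp

lemma norming: assumes rp: "read_params u a" and f: "f \<in> read_dual u a" and g: "\<gamma> > 0"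
  shows "\<exists>x\<in>c0. read_norm u a x = 1 \<and> f x \<ge> dual_norm u a f - \<gamma>"
proof -
  have ne: "{x\<in>c0. read_norm u a x \<le> 1} \<noteq> {}" using c0_zero R_zero by auto
  have "dual_norm u a f - \<gamma> < (SUP x\<in>{x\<in>c0. read_norm u a x \<le> 1}. \<bar>f x\<bar>)"
    using g unfolding dual_norm_def by simp
  then obtain x0 where x0: "x0 \<in> c0" "read_norm u a x0 \<le> 1" "dual_norm u a f - \<gamma> < \<bar>f x0\<bar>"
    using less_cSUP_iff[OF ne dual_bdd[OF rp f]] by auto
  show ?thesis
  proof (cases "read_norm u a x0 > 0")
    case True
    obtain x where x: "x \<in> c0" "read_norm u a x = 1" "f x = \<bar>f x0\<bar> / read_norm u a x0"
      using normalize[OF rp f x0(1) True] by blast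
    have "\<bar>f x0\<bar> \<le> \<bar>f x0\<bar> / read_norm u a x0" using True x0(2)
      by (simp add: le_divide_eq mult_left_le)
    then show ?thesis using x x0 by auto
  next
    case False
    then have "read_norm u a x0 = 0" using R_nonneg[OF rp x0(1)] by simp
    then have "f x0 = 0" using dual_bound[OF rp f x0(1)] by simp
    then have neg: "dual_norm u a f - \<gamma> < 0" using x0 by simp
    have R1: "read_norm u a (\<lambda>k. if k = 0 then 1 else 0) > 0" using unit_R[OF rp, of 0] by simp
    obtain x where x: "x \<in> c0" "read_norm u a x = 1" "f x = \<bar>f (\<lambda>k. if k = 0 then 1 else 0)\<bar> / read_norm u a (\<lambda>k. if k = 0 then 1 else 0)"
      using normalize[OF rp f c0_unit R1] by blast
    have "f x \<ge> 0" using x(3) R1 by simp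
    then show ?thesis using x neg by auto
  qed
qed

lemma unit_SS: assumes rp: "read_params u a"
  shows "SS u a (\<lambda>k. if k = a N then 1 else 0) \<le> 2 * (1/2)^N"
proof -
  let ?e = "(\<lambda>k. if k = a N then 1 else 0::real)"
  have B: "\<And>k. \<bar>?e k\<bar> \<le> 1" by auto
  have sm: "strict_mono a" using rp unfolding read_params_def by auto
  have T: "Tm u a ?e n \<le> (1/2)^N * (1/2)^n" for n
  proof (cases "n < N")
    case True
    then have an: "a n < a N" using sm by (simp add: strict_mono_less)
    have "a N \<notin> supp (u n)" using rp an unfolding read_params_def by (meson not_less_iff_gr_or_eq)
    then have "pair ?e (u n) = 0" unfolding pair_def by (intro sum.neutral) auto
    then have "Tm u a ?e n = 0" unfolding Tm_def using an by simp
    then show ?thesis by simp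
  next
    case False
    have "Tm u a ?e n \<le> 1 * (1/4)^n" by (rule Tm_bound[OF rp B])
    also have "\<dots> = (1/2)^n * (1/2)^n" by (simp add: power_mult_distrib[symmetric])
    also have "\<dots> \<le> (1/2)^N * (1/2)^n" using False by (intro mult_right_mono power_decreasing) auto
    finally show ?thesis .
  qed
  have "SS u a ?e \<le> (\<Sum>n. (1/2)^N * (1/2::real)^n)" unfolding SS_def
    by (rule suminf_le[OF T summable_Tm[OF rp B] summable_mult[OF summable_geometric]]) auto
  also have "\<dots> = (1/2)^N * 2"
    using suminf_mult[OF summable_geometric[of "1/2::real"], of "(1/2)^N"] suminf_geometric[of "1/2::real"] by simp
  finally show ?thesis by simp
qed

theorem theorem2p6:
  fixes u :: "nat \<Rightarrow> nat \<Rightarrow> rat" and a :: "nat \<Rightarrow> nat"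
  assumes "read_params u a"
  shows "rough (read_dual u a) (dual_norm u a) (2/3)"
  unfolding rough_def
proof (intro ballI allI impI)
  note rp = assms
  fix f :: "(nat \<Rightarrow> real) \<Rightarrow> real" and \<delta> \<eta> :: real
  assume f: "f \<in> read_dual u a" and \<delta>: "0 < \<delta>" and \<eta>: "0 < \<eta>"
  define F where "F = dual_norm u a f"
  have F0: "0 \<le> F" unfolding F_def by (rule dual_nonneg[OF rp f])
  define t where "t = \<delta> / 2"
  have t0: "0 < t" using \<delta> unfolding t_def by simp
  define \<epsilon> :: real where "\<epsilon> = 1/30"
  define \<gamma> where "\<gamma> = \<epsilon> * t / 2"
  have \<gamma>0: "0 < \<gamma>" unfolding \<gamma>_def \<epsilon>_def using t0 by simp
  obtain x where xc: "x \<in> c0" and Rx: "read_norm u a x = 1" and fx: "f x \<ge> F - \<gamma>"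
    using norming[OF rp f \<gamma>0] unfolding F_def by blast
  define \<beta> where "\<beta> = sup_norm x"
  have \<beta>1: "\<beta> \<le> 1" using R_ge_sup[OF rp xc] Rx unfolding \<beta>_def by simp
  have \<beta>2: "3/7 \<le> \<beta>" using R_le_sup[OF rp xc] Rx unfolding \<beta>_def by simp
  have Bx: "\<And>k. \<bar>x k\<bar> \<le> \<beta>" unfolding \<beta>_def using abs_le_sup[OF xc] .
  have SSx: "SS u a x = 1 - \<beta>" using Rx unfolding R_eq \<beta>_def by simp
  define c where "c = \<epsilon> * t / (4 * F + 1)"
  have c0: "0 < c" unfolding c_def \<epsilon>_def using t0 F0 by simp
  have "(\<lambda>N. 2 * (1/2::real)^N) \<longlonglongrightarrow> 0"
    using tendsto_mult_right_zero[OF LIMSEQ_power_zero[of "1/2::real"]] by simp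
  then have ev1: "eventually (\<lambda>N. dist (2 * (1/2::real)^N) 0 < min c (\<epsilon>/2)) sequentially"
    by (rule tendstoD) (use c0 in \<open>simp add: \<epsilon>_def\<close>)
  have sm: "strict_mono a" using rp unfolding read_params_def by auto
  have "(x \<circ> a) \<longlonglongrightarrow> 0" using LIMSEQ_subseq_LIMSEQ[OF _ sm] xc unfolding c0_def by simp
  then have ev2: "eventually (\<lambda>N. dist ((x \<circ> a) N) 0 < c) sequentially"
    by (rule tendstoD) (rule c0)
  obtain N where N1: "2 * (1/2::real)^N < min c (\<epsilon>/2)" and N2: "\<bar>x (a N)\<bar> < c"
    using eventually_happens'[OF _ eventually_conj[OF ev1 ev2]] by auto
  define m where "m = a N"
  define e where "e = (\<lambda>k. if k = m then 1 else (0::real))"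
  define \<sigma> where "\<sigma> = SS u a e"
  have ec: "e \<in> c0" unfolding e_def by (rule c0_unit)
  have Be: "\<And>k. \<bar>e k\<bar> \<le> 1" unfolding e_def by auto
  have \<sigma>0: "0 \<le> \<sigma>" unfolding \<sigma>_def by (rule SS_nonneg[OF rp Be])
  have \<sigma>1: "\<sigma> < c" "\<sigma> < \<epsilon>/2"
    using unit_SS[OF rp, of N] N1 unfolding \<sigma>_def e_def m_def by auto
  have Re1: "read_norm u a e \<le> 1 + \<sigma>" unfolding R_eq \<sigma>_def e_def using unit_sup[of m] by simp
  have Re2: "1 \<le> read_norm u a e" unfolding e_def by (rule unit_R[OF rp])
  have xm: "\<bar>x m\<bar> < c" using N2 unfolding m_def .
  define cp where "cp = \<beta> - x m"
  define cm where "cm = - \<beta> - x m"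
  define yp where "yp = (\<lambda>k. x k + cp * e k)"
  define ym where "ym = (\<lambda>k. x k + cm * e k)"
  have ypc: "yp \<in> c0" unfolding yp_def using c0_add[OF xc c0_scale[OF ec]] by simp
  have ymc: "ym \<in> c0" unfolding ym_def using c0_add[OF xc c0_scale[OF ec]] by simp
  have xm\<beta>: "\<bar>x m\<bar> \<le> \<beta>" by (rule Bx)
  have cpb: "\<bar>cp\<bar> \<le> 2" unfolding cp_def using xm\<beta> \<beta>1 by linarith
  have cmb: "\<bar>cm\<bar> \<le> 2" unfolding cm_def using xm\<beta> \<beta>1 by linarith
  have ypb: "\<And>k. \<bar>yp k\<bar> \<le> \<beta>" unfolding yp_def e_def cp_def using Bx \<beta>2 by auto
  have ymb: "\<And>k. \<bar>ym k\<bar> \<le> \<beta>" unfolding ym_def e_def cm_def using Bx \<beta>2 by auto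
  define D where "D = 1 + 2 * \<sigma>"
  have Ryp: "read_norm u a yp \<le> D"
  proof -
    have "SS u a yp \<le> SS u a x + \<bar>cp\<bar> * \<sigma>" unfolding yp_def \<sigma>_def by (rule SS_lin[OF rp Bx Be])
    also have "\<dots> \<le> (1 - \<beta>) + 2 * \<sigma>" using SSx cpb \<sigma>0 by (simp add: mult_right_mono)
    finally show ?thesis unfolding R_eq D_def using sup_le[where x=yp and B=\<beta>, OF ypb] by simp
  qed
  have Rym: "read_norm u a ym \<le> D"
  proof -
    have "SS u a ym \<le> SS u a x + \<bar>cm\<bar> * \<sigma>" unfolding ym_def \<sigma>_def by (rule SS_lin[OF rp Bx Be])
    also have "\<dots> \<le> (1 - \<beta>) + 2 * \<sigma>" using SSx cmb \<sigma>0 by (simp add: mult_right_mono)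
    finally show ?thesis unfolding R_eq D_def using sup_le[where x=ym and B=\<beta>, OF ymb] by simp
  qed
  define h where "h = (\<lambda>w::nat \<Rightarrow> real. t * w m)"
  have hX: "h \<in> read_dual u a" unfolding h_def by (rule eval_dual[OF rp]) (use t0 in simp)
  have fp: "(\<lambda>s. f s + h s) \<in> read_dual u a" using dual_add[OF rp f hX, of 1] by simp
  have fm: "(\<lambda>s. f s - h s) \<in> read_dual u a" using dual_add[OF rp f hX, of "-1"] by simp
  define Np where "Np = dual_norm u a (\<lambda>s. f s + h s)"
  define Nm where "Nm = dual_norm u a (\<lambda>s. f s - h s)"
  define Nh where "Nh = dual_norm u a h"
  have Np0: "0 \<le> Np" unfolding Np_def by (rule dual_nonneg[OF rp fp])
  have Nm0: "0 \<le> Nm" unfolding Nm_def by (rule dual_nonneg[OF rp fm])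
  have fyp: "f yp = f x + cp * f e" unfolding yp_def by (rule dual_lin[OF f xc ec])
  have fym: "f ym = f x + cm * f e" unfolding ym_def by (rule dual_lin[OF f xc ec])
  have hyp: "h yp = t * \<beta>" unfolding h_def yp_def e_def cp_def by simp
  have hym: "h ym = - t * \<beta>" unfolding h_def ym_def e_def cm_def by simp
  have P1: "f x + cp * f e + t * \<beta> \<le> Np * D"
  proof -
    have "f yp + h yp \<le> Np * read_norm u a yp" using dual_bound[OF rp fp ypc] unfolding Np_def by simp
    also have "\<dots> \<le> Np * D" using Ryp Np0 by (simp add: mult_left_mono)
    finally show ?thesis using fyp hyp by simp
  qed
  have P2: "f x + cm * f e + t * \<beta> \<le> Nm * D"
  proof -
    have "f ym - h ym \<le> Nm * read_norm u a ym" using dual_bound[OF rp fm ymc] unfolding Nm_def by simp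
    also have "\<dots> \<le> Nm * D" using Rym Nm0 by (simp add: mult_left_mono)
    finally show ?thesis using fym hym by simp
  qed
  have fe: "\<bar>f e\<bar> \<le> 2 * F"
  proof -
    have "\<bar>f e\<bar> \<le> F * read_norm u a e" using dual_bound[OF rp f ec] unfolding F_def .
    also have "\<dots> \<le> F * 2" using Re1 \<sigma>1 F0 unfolding \<epsilon>_def by (intro mult_left_mono) auto
    finally show ?thesis by simp
  qed
  have Q1: "\<bar>x m * f e\<bar> \<le> \<bar>x m\<bar> * (2 * F)" unfolding abs_mult using fe by (intro mult_left_mono) auto
  have Q2: "(4 * F + 1) * \<bar>x m\<bar> \<le> \<epsilon> * t"
  proof -
    have "(4 * F + 1) * \<bar>x m\<bar> \<le> (4 * F + 1) * c" using xm F0 by (intro mult_left_mono) auto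
    also have "\<dots> = \<epsilon> * t" unfolding c_def using F0 by simp
    finally show ?thesis .
  qed
  have Q3: "(4 * F + 1) * \<sigma> \<le> \<epsilon> * t"
  proof -
    have "(4 * F + 1) * \<sigma> \<le> (4 * F + 1) * c" using \<sigma>1 F0 by (intro mult_left_mono) auto
    also have "\<dots> = \<epsilon> * t" unfolding c_def using F0 by simp
    finally show ?thesis .
  qed
  have Q4: "F * \<sigma> \<ge> 0" "F * \<bar>x m\<bar> \<ge> 0" using F0 \<sigma>0 by auto
  have Q5: "t * \<beta> \<ge> t * (3/7)" using \<beta>2 t0 by (intro mult_left_mono) auto
  define L where "L = Np + Nm - 2 * F"
  have LD: "L * D \<ge> (53/70) * t"
  proof -
    have "L * D = Np * D + Nm * D - 2 * F * D" unfolding L_def by (simp add: algebra_simps)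
    moreover have "2 * F * D = 2 * F + 4 * (F * \<sigma>)" unfolding D_def by (simp add: algebra_simps)
    ultimately have A1: "L * D \<ge> 2 * f x - 2 * (x m * f e) + 2 * (t * \<beta>) - 2 * F - 4 * (F * \<sigma>)"
      using P1 P2 unfolding cp_def cm_def by (simp add: algebra_simps)
    have A2: "x m * f e \<le> 2 * (F * \<bar>x m\<bar>)" using Q1 by (simp add: algebra_simps)
    have A3: "4 * (F * \<bar>x m\<bar>) \<le> t / 30" using Q2 unfolding \<epsilon>_def by (simp add: algebra_simps)
    have A4: "4 * (F * \<sigma>) \<le> t / 30" using Q3 \<sigma>0 unfolding \<epsilon>_def by (simp add: algebra_simps)
    have A5: "f x \<ge> F - t / 60" using fx unfolding \<gamma>_def \<epsilon>_def by simp
    have A6: "t * \<beta> \<ge> 3 * t / 7" using Q5 by simp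
    show ?thesis using A1 A2 A3 A4 A5 A6 by linarith
  qed
  have D1: "1 \<le> D" "D \<le> 31/30" using \<sigma>0 \<sigma>1 unfolding D_def \<epsilon>_def by auto
  have L23: "L > (2/3) * t"
  proof (rule ccontr)
    assume "\<not> L > (2/3) * t"
    then have "L * D \<le> (2/3) * t * D" using D1 by (intro mult_right_mono) auto
    also have "\<dots> \<le> (2/3) * t * (31/30)" using D1 t0 by (intro mult_left_mono) auto
    finally show False using LD t0 by simp
  qed
  have Nht: "Nh \<le> t" unfolding Nh_def
  proof (rule dual_le)
    fix w assume w: "w \<in> c0" "read_norm u a w \<le> 1"
    have "\<bar>h w\<bar> \<le> t * sup_norm w" unfolding h_def using abs_le_sup[OF w(1), of m] t0
      by (simp add: abs_mult mult_left_mono)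
    also have "\<dots> \<le> t * 1" using R_ge_sup[OF rp w(1)] w(2) t0 by (intro mult_left_mono) auto
    finally show "\<bar>h w\<bar> \<le> t" by simp
  qed
  have Nh0: "0 < Nh"
  proof -
    have "\<bar>h e\<bar> \<le> Nh * read_norm u a e" using dual_bound[OF rp hX ec] unfolding Nh_def .
    moreover have "\<bar>h e\<bar> = t" unfolding h_def e_def using t0 by simp
    ultimately have "t \<le> Nh * read_norm u a e" by simp
    then have "Nh \<noteq> 0" using t0 by auto
    moreover have "0 \<le> Nh" unfolding Nh_def by (rule dual_nonneg[OF rp hX])
    ultimately show ?thesis by simp
  qed
  show "\<exists>h\<in>read_dual u a. 0 < dual_norm u a h \<and> dual_norm u a h < \<delta> \<and>
        2 / 3 - \<eta> < (dual_norm u a (\<lambda>s. f s + h s) + dual_norm u a (\<lambda>s. f s - h s) - 2 * dual_norm u a f) / dual_norm u a h"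
  proof (intro bexI conjI)
    show "0 < dual_norm u a h" using Nh0 unfolding Nh_def .
    show "dual_norm u a h < \<delta>" using Nht \<delta> unfolding Nh_def t_def by simp
    have "\<eta> * Nh > 0" using Nh0 \<eta> by simp
    then have "(2/3 - \<eta>) * Nh < (2/3) * t" using Nht by (simp add: algebra_simps)
    also have "\<dots> < L" by (rule L23)
    finally have "2/3 - \<eta> < L / Nh" using Nh0 by (simp add: pos_less_divide_eq)
    then show "2 / 3 - \<eta> < (dual_norm u a (\<lambda>s. f s + h s) + dual_norm u a (\<lambda>s. f s - h s) - 2 * dual_norm u a f) / dual_norm u a h"
      unfolding L_def Np_def Nm_def Nh_def F_def .
  qed (rule hX)
qed

end
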